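(* Fix a task index $t\in\{1,2,\dots\}$ with input dimension $M_t$, output dimension $C_t$, compact domain $D_t\subset\mathbb{R}^{M_t}$, and target function $f=[f_1,\dots,f_{C_t}]\in L_2(D_t)$. Suppose that $\mathrm{span}(\Gamma)$ is dense in $L_2$ space and that, for all $g\in\Gamma$, $G$ is a collection of some $g$ with nonlinear activation. Let $0<r(t)<1$ and let $\{\mu_L(t)\}_{L\ge 1}$ be a non-negative real sequence with $\lim_{L\to+\infty}\mu_L(t)=0$ and $\mu_L(t)\le 1-r(t)$ for all $L$. Let $l\in\mathbb{N}^+$ be a step size. Nodes $g_1,g_2,\dots\in\Gamma$ are added to the network in batches of $l$; for $L=1,2,\dots$ (with $L$ running over the batch endpoints) set $$\delta_L^\star(t)=\sum_{c=1}^{C_t}\delta_{L,c}^\star(t),\qquad \delta_{L,c}^\star(t)=(1-r(t)-\mu_L(t))\,\|e_{L-l,c}^\star(t)\|^2 .$$ Suppose that each new batch of nodes $G_l=[g_{L-l+1},\dots,g_L]$ (with $g_j(x)=g(xw_j+b_j)$, i.e. $G_l=G_l(X_tW_l+B_l)$ with randomly generated weights $W_l$ and biases $B_l$) is chosen so that $$\langle e_{L-l,c}^\star(t),\,G_l\beta_{l,c}(t)\rangle\ \ge\ \delta_{L,c}^\star(t),\qquad c=1,2,\dots,C_t,$$ and is connected to the existing network through output weights determined in the least-squares sense $$[\beta_1^\star(t),\dots,\beta_L^\star(t)]=\arg\min_{\beta(t)}\Big\|f-\sum_{j=1}^{L}\beta_j(t)g_j\Big\|.$$ Then $\lim_{L\to+\infty}\|f-f_L^\star\|=0$,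 where $f_L^\star=f_{L-l}^\star+\beta_l^\star(t)G_l=\sum_{j=1}^L\beta_j^\star(t)g_j$.
   Context: $\Gamma=\{g_1,g_2,\dots\}$ is a set of bounded nonconstant piecewise continuous functions and $\mathrm{span}(\Gamma)$ is the function space spanned by $\Gamma$. $L_2(D_t)$ is the space of Lebesgue measurable $f=[f_1,\dots,f_{C_t}]:\mathbb{R}^{M_t}\to\mathbb{R}^{C_t}$ on $D_t$ with norm $\|f\|=\big(\sum_{c=1}^{C_t}\int_{D_t}|f_c(x)|^2dx\big)^{1/2}<\infty$, and inner product $\langle f,\vartheta\rangle=\sum_{c=1}^{C_t}\langle f_c,\vartheta_c\rangle=\sum_{c=1}^{C_t}\int_{D_t}f_c(x)\vartheta_c(x)\,dx$; for scalar-valued functions the inner product is $\int_{D_t}f_c\vartheta_c\,dx$. Each output weight $\beta_j(t)\in\mathbb{R}^{1\times C_t}$ is a row vector, so $\beta_j(t)g_j$ is $\mathbb{R}^{C_t}$-valued. The optimal residual after $L$ nodes is $e_L^\star(t)=f-\sum_{j=1}^L\beta_j^\star(t)g_j$ with $e_0^\star(t)=f$, and $e_{L,c}^\star(t)$ denotes its $c$-th component. For the batch $G_l=[g_{L-l+1},\dots,g_L]$ and a coefficient vector $\beta=(\beta_{L-l+1},\dots,\beta_L)^{\mathrm T}\in\mathbb{R}^l$, $G_l\beta=\sum_{j=L-l+1}^{L}\beta_jg_j$. The intermediate output weights are $\beta_{l,c}(t)=(G_l^{\mathrm T}G_l)^\dagger G_l^{\mathrm T}e_{L-l,c}^\star(t)$,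 i.e. the least-squares coefficients of $e_{L-l,c}^\star(t)$ on $g_{L-l+1},\dots,g_L$, where $G_l^{\mathrm T}G_l$ is the Gram matrix $(\langle g_i,g_j\rangle)_{i,j}$, $G_l^{\mathrm T}e$ is the vector $(\langle g_j,e\rangle)_j$, and $^\dagger$ denotes the Moore–Penrose pseudoinverse. *)

theory Defs
  imports "HOL-Analysis.Analysis"
begin

definition L2_on :: "('m::euclidean_space) set \<Rightarrow> ('m \<Rightarrow> real) \<Rightarrow> bool" where
  "L2_on D u \<longleftrightarrow> u \<in> borel_measurable (lebesgue_on D) \<and>
                   integrable (lebesgue_on D) (\<lambda>x. (u x)^2)"

definition l2_inner :: "('m::euclidean_space) set \<Rightarrow> ('m \<Rightarrow> real) \<Rightarrow> ('m \<Rightarrow> real) \<Rightarrow> real" where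
  "l2_inner D u v = integral\<^sup>L (lebesgue_on D) (\<lambda>x. u x * v x)"

definition l2_norm :: "('m::euclidean_space) set \<Rightarrow> ('m \<Rightarrow> real) \<Rightarrow> real" where
  "l2_norm D u = sqrt (l2_inner D u u)"

definition vl2_norm :: "('m::euclidean_space) set \<Rightarrow> ('m \<Rightarrow> real^'c) \<Rightarrow> real" where
  "vl2_norm D F = sqrt (\<Sum>c\<in>UNIV. (l2_norm D (\<lambda>x. F x $ c))^2)"

definition piecewise_continuous :: "('m::euclidean_space \<Rightarrow> real) \<Rightarrow> bool" where
  "piecewise_continuous g \<longleftrightarrow>
     (\<exists>U. open U \<and> (UNIV - U) \<in> null_sets lebesgue \<and> continuous_on U g)"

definition admissible_node :: "('m::euclidean_space \<Rightarrow> real) \<Rightarrow> bool" where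
  "admissible_node g \<longleftrightarrow> g \<in> borel_measurable lebesgue \<and> bounded (range g) \<and>
     (\<exists>x y. g x \<noteq> g y) \<and> piecewise_continuous g"

definition span_dense_L2 :: "('m::euclidean_space) set \<Rightarrow> ('m \<Rightarrow> real) set \<Rightarrow> bool" where
  "span_dense_L2 D \<Gamma> \<longleftrightarrow>
     (\<forall>u. L2_on D u \<longrightarrow> (\<forall>\<epsilon>>0. \<exists>n (h::nat \<Rightarrow> 'm \<Rightarrow> real) (a::nat \<Rightarrow> real).
        (\<forall>i<n. h i \<in> \<Gamma>) \<and> l2_norm D (\<lambda>x. u x - (\<Sum>i<n. a i * h i x)) < \<epsilon>))"

definition net_out :: "(nat \<Rightarrow> 'm \<Rightarrow> real) \<Rightarrow> (nat \<Rightarrow> real^'c) \<Rightarrow> nat \<Rightarrow> 'm \<Rightarrow> real^'c" where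
  "net_out g \<beta> L x = (\<Sum>j\<in>{1..L}. g j x *\<^sub>R \<beta> j)"

definition is_LS_weights ::
  "('m::euclidean_space) set \<Rightarrow> ('m \<Rightarrow> real^'c) \<Rightarrow> (nat \<Rightarrow> 'm \<Rightarrow> real) \<Rightarrow> nat \<Rightarrow> (nat \<Rightarrow> real^'c) \<Rightarrow> bool" where
  "is_LS_weights D f g L \<beta> \<longleftrightarrow>
     (\<forall>\<beta>'. vl2_norm D (\<lambda>x. f x - net_out g \<beta> L x) \<le> vl2_norm D (\<lambda>x. f x - net_out g \<beta>' L x))"

definition mat_mult :: "nat \<Rightarrow> (nat \<Rightarrow> nat \<Rightarrow> real) \<Rightarrow> (nat \<Rightarrow> nat \<Rightarrow> real) \<Rightarrow> nat \<Rightarrow> nat \<Rightarrow> real" where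
  "mat_mult n A B i j = (\<Sum>k<n. A i k * B k j)"

definition is_MP_inverse :: "nat \<Rightarrow> (nat \<Rightarrow> nat \<Rightarrow> real) \<Rightarrow> (nat \<Rightarrow> nat \<Rightarrow> real) \<Rightarrow> bool" where
  "is_MP_inverse n A X \<longleftrightarrow>
     (\<forall>i<n. \<forall>j<n.
        mat_mult n (mat_mult n A X) A i j = A i j \<and>
        mat_mult n (mat_mult n X A) X i j = X i j \<and>
        mat_mult n A X i j = mat_mult n A X j i \<and>
        mat_mult n X A i j = mat_mult n X A j i) \<and>
     (\<forall>i j. \<not> (i < n \<and> j < n) \<longrightarrow> X i j = 0)"

definition MP_pinv :: "nat \<Rightarrow> (nat \<Rightarrow> nat \<Rightarrow> real) \<Rightarrow> nat \<Rightarrow> nat \<Rightarrow> real" where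
  "MP_pinv n A = (THE X. is_MP_inverse n A X)"

text \<open>Index i < l refers to node g_{L-l+1+i}.\<close>
definition batch_gram :: "('m::euclidean_space) set \<Rightarrow> (nat \<Rightarrow> 'm \<Rightarrow> real) \<Rightarrow> nat \<Rightarrow> nat \<Rightarrow> nat \<Rightarrow> nat \<Rightarrow> real" where
  "batch_gram D g l L i j = l2_inner D (g (L - l + 1 + i)) (g (L - l + 1 + j))"

definition batch_beta ::
  "('m::euclidean_space) set \<Rightarrow> (nat \<Rightarrow> 'm \<Rightarrow> real) \<Rightarrow> nat \<Rightarrow> nat \<Rightarrow> ('m \<Rightarrow> real) \<Rightarrow> nat \<Rightarrow> real" where
  "batch_beta D g l L e i =
     (\<Sum>j<l. MP_pinv l (batch_gram D g l L) i j * l2_inner D (g (L - l + 1 + j)) e)"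

definition batch_out ::
  "('m::euclidean_space) set \<Rightarrow> (nat \<Rightarrow> 'm \<Rightarrow> real) \<Rightarrow> nat \<Rightarrow> nat \<Rightarrow> ('m \<Rightarrow> real) \<Rightarrow> 'm \<Rightarrow> real" where
  "batch_out D g l L e x = (\<Sum>i<l. batch_beta D g l L e i * g (L - l + 1 + i) x)"

end

theory Submission
  imports Defs "HOL-Library.Function_Algebras"
begin

definition sp :: "nat \<Rightarrow> (nat\<Rightarrow>nat\<Rightarrow>real) \<Rightarrow> bool" where
  "sp n A \<longleftrightarrow> (\<forall>i j. \<not>(i<n \<and> j<n) \<longrightarrow> A i j = 0)"
definition mm :: "nat \<Rightarrow> (nat\<Rightarrow>nat\<Rightarrow>real) \<Rightarrow> (nat\<Rightarrow>nat\<Rightarrow>real) \<Rightarrow> nat\<Rightarrow>nat\<Rightarrow>real" where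
  "mm n A B = (\<lambda>i j. if i<n \<and> j<n then (\<Sum>k<n. A i k * B k j) else 0)"
definition idm :: "nat \<Rightarrow> nat\<Rightarrow>nat\<Rightarrow>real" where
  "idm n = (\<lambda>i j. if i<n \<and> i=j then 1 else 0)"
definition tr :: "(nat\<Rightarrow>nat\<Rightarrow>real) \<Rightarrow> nat\<Rightarrow>nat\<Rightarrow>real" where
  "tr A = (\<lambda>i j. A j i)"
definition sc :: "real \<Rightarrow> (nat\<Rightarrow>nat\<Rightarrow>real) \<Rightarrow> nat\<Rightarrow>nat\<Rightarrow>real" where
  "sc c A = (\<lambda>i j. c * A i j)"
primrec pw :: "nat \<Rightarrow> (nat\<Rightarrow>nat\<Rightarrow>real) \<Rightarrow> nat \<Rightarrow> nat\<Rightarrow>nat\<Rightarrow>real" where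
  "pw n A 0 = idm n" | "pw n A (Suc k) = mm n A (pw n A k)"

lemma sum_fun2: "(sum F K) i j = (\<Sum>k\<in>K. F k i j)"
  by (induction K rule: infinite_finite_induct) auto

lemma mm_assoc: "mm n (mm n A B) C = mm n A (mm n B C)"
proof (intro ext)
  fix i j
  show "mm n (mm n A B) C i j = mm n A (mm n B C) i j"
    unfolding mm_def
    by (auto simp: sum_distrib_left sum_distrib_right mult.assoc intro: sum.swap)
qed

lemma sp_mm[simp]: "sp n (mm n A B)" by (simp add: sp_def mm_def)
lemma sp_idm[simp]: "sp n (idm n)" by (simp add: sp_def idm_def)
lemma sp_pw[simp]: "sp n (pw n A k)" by (cases k) auto
lemma sp_tr: "sp n A \<Longrightarrow> sp n (tr A)" by (auto simp: sp_def tr_def)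
lemma sp_sc[simp]: "sp n A \<Longrightarrow> sp n (sc c A)" by (auto simp: sp_def sc_def)
lemma sp_add[simp]: "sp n A \<Longrightarrow> sp n B \<Longrightarrow> sp n (A + B)" by (auto simp: sp_def)
lemma sp_zero[simp]: "sp n 0" by (auto simp: sp_def)
lemma sp_sum: "(\<And>k. k\<in>K \<Longrightarrow> sp n (F k)) \<Longrightarrow> sp n (sum F K)"
  by (auto simp: sp_def sum_fun2)

lemma mm_idm_l: "sp n B \<Longrightarrow> mm n (idm n) B = B"
proof -
  assume "sp n B"
  have "(\<Sum>k<n. (if i < n \<and> i = k then 1 else 0) * B k j) = B i j" if "i<n" for i j
    using that by (simp add: if_distrib[of "\<lambda>x. x * _"] cong: if_cong)
  then show ?thesis using \<open>sp n B\<close> by (auto simp: mm_def idm_def sp_def fun_eq_iff)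
qed
lemma mm_idm_r: "sp n B \<Longrightarrow> mm n B (idm n) = B"
proof -
  assume "sp n B"
  have "(\<Sum>k<n. B i k * (if k < n \<and> k = j then 1 else 0)) = B i j" if "j<n" for i j
    using that by (simp add: if_distrib[of "\<lambda>x. _ * x"] cong: if_cong)
  then show ?thesis using \<open>sp n B\<close> by (auto simp: mm_def idm_def sp_def fun_eq_iff)
qed
lemma tr_mm: "tr (mm n A B) = mm n (tr B) (tr A)"
  by (auto simp: mm_def tr_def fun_eq_iff mult.commute)
lemma tr_tr[simp]: "tr (tr A) = A" by (simp add: tr_def)
lemma tr_idm[simp]: "tr (idm n) = idm n" by (auto simp: tr_def idm_def fun_eq_iff)
lemma tr_sc: "tr (sc c A) = sc c (tr A)" by (simp add: tr_def sc_def)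
lemma tr_add: "tr (A + B) = tr A + tr B" by (simp add: tr_def fun_eq_iff)
lemma tr_zero[simp]: "tr 0 = 0" by (simp add: tr_def fun_eq_iff)

lemma mm_add_r: "mm n A (B + C) = mm n A B + mm n A C"
  by (auto simp: mm_def fun_eq_iff algebra_simps sum.distrib)
lemma mm_add_l: "mm n (B + C) A = mm n B A + mm n C A"
  by (auto simp: mm_def fun_eq_iff algebra_simps sum.distrib)
lemma mm_sc_r: "mm n A (sc c B) = sc c (mm n A B)"
  by (auto simp: mm_def sc_def fun_eq_iff algebra_simps sum_distrib_left)
lemma mm_sc_l: "mm n (sc c B) A = sc c (mm n B A)"
  by (auto simp: mm_def sc_def fun_eq_iff algebra_simps sum_distrib_left)
lemma mm_zero_r[simp]: "mm n A 0 = 0" by (auto simp: mm_def fun_eq_iff)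
lemma mm_zero_l[simp]: "mm n 0 A = 0" by (auto simp: mm_def fun_eq_iff)
lemma mm_sum_r: "mm n A (sum F K) = (\<Sum>k\<in>K. mm n A (F k))"
  by (auto simp: fun_eq_iff sum_fun2 mm_def sum_distrib_left intro: sum.swap)
lemma mm_sum_l: "mm n (sum F K) A = (\<Sum>k\<in>K. mm n (F k) A)"
  by (auto simp: fun_eq_iff sum_fun2 mm_def sum_distrib_right intro: sum.swap)
lemma tr_sum: "tr (sum F K) = (\<Sum>k\<in>K. tr (F k))"
  by (auto simp: fun_eq_iff sum_fun2 tr_def)

lemma pw_comm: "sp n A \<Longrightarrow> mm n A (pw n A k) = mm n (pw n A k) A"
proof (induction k)
  case 0 then show ?case by (simp add: mm_idm_l mm_idm_r)
next
  case (Suc k)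
  have "mm n (pw n A (Suc k)) A = mm n A (mm n (pw n A k) A)" by (simp add: mm_assoc)
  also have "\<dots> = mm n A (pw n A (Suc k))" using Suc by simp
  finally show ?case by simp
qed

lemma pw_add: "sp n A \<Longrightarrow> mm n (pw n A a) (pw n A b) = pw n A (a+b)"
  by (induction a) (auto simp: mm_idm_l mm_assoc)

lemma tr_pw: "sp n A \<Longrightarrow> tr A = A \<Longrightarrow> tr (pw n A k) = pw n A k"
  by (induction k) (auto simp: tr_mm pw_comm)

lemma sc_zero[simp]: "sc 0 A = 0" by (simp add: sc_def fun_eq_iff)

lemma tr_sym: "tr A = A \<Longrightarrow> A i k = A k i"
  by (metis tr_def)

lemma ker2:
  assumes "sp n A" "tr A = A" "mm n A (mm n A M) = 0"
  shows "mm n A M = 0"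
proof -
  define N where "N = mm n A M"
  have AN: "mm n A N = 0" using assms N_def by simp
  have sym: "A i k = A k i" for i k using assms(2) by (rule tr_sym)
  have sq: "(\<Sum>i<n. N i j * N i j) = 0" if "j<n" for j
  proof -
    have "(\<Sum>i<n. N i j * N i j) = (\<Sum>i<n. N i j * (\<Sum>k<n. A i k * M k j))"
      using that by (intro sum.cong) (auto simp: N_def mm_def)
    also have "\<dots> = (\<Sum>i<n. \<Sum>k<n. M k j * (A k i * N i j))"
      by (simp add: sum_distrib_left sym ac_simps)
    also have "\<dots> = (\<Sum>k<n. \<Sum>i<n. M k j * (A k i * N i j))"
      by (rule sum.swap)
    also have "\<dots> = (\<Sum>k<n. M k j * mm n A N k j)"
      using that by (intro sum.cong) (auto simp: mm_def sum_distrib_left)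
    also have "\<dots> = 0" using AN by simp
    finally show ?thesis .
  qed
  have "N i j = 0" for i j
  proof (cases "i<n \<and> j<n")
    case True
    then have "\<forall>i\<in>{..<n}. N i j * N i j = 0"
      using sq[of j] sum_nonneg_eq_0_iff[of "{..<n}" "\<lambda>i. N i j * N i j"] by simp
    then show ?thesis using True by auto
  next
    case False then show ?thesis unfolding N_def mm_def by auto
  qed
  then show ?thesis by (auto simp: N_def fun_eq_iff)
qed

lemma ker:
  assumes "sp n A" "tr A = A"
  shows "mm n (pw n A (Suc m)) M = 0 \<Longrightarrow> mm n A M = 0"
proof (induction m arbitrary: M)
  case 0 then show ?case using assms by (simp add: mm_idm_r)
next
  case (Suc m)
  have "pw n A (Suc (Suc m)) = mm n (pw n A (Suc m)) (pw n A 1)"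
    using pw_add[OF assms(1), of "Suc m" 1] by simp
  also have "pw n A 1 = A" using assms by (simp add: mm_idm_r)
  finally have "mm n (pw n A (Suc m)) (mm n A M) = 0"
    using Suc.prems by (simp only: mm_assoc)
  then have "mm n A (mm n A M) = 0" by (rule Suc.IH)
  then show ?case using ker2 assms by blast
qed

lemma shift_sum:
  "(\<Sum>k\<le>N. sc (c k) (pw n A k)) = sc (c 0) (idm n) + mm n A (\<Sum>k<N. sc (c (Suc k)) (pw n A k))"
proof (cases N)
  case 0 then show ?thesis by simp
next
  case (Suc M)
  show ?thesis unfolding Suc sum.atMost_Suc_shift lessThan_Suc_atMost
    by (simp add: mm_sum_r mm_sc_r)
qed

lemma red:
  assumes "sp n A"
  shows "(\<exists>k\<le>N. c k \<noteq> 0) \<Longrightarrow> mm n W (\<Sum>k\<le>N. sc (c k) (pw n A k)) = 0 \<Longrightarrow>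
     \<exists>m d N'. d 0 \<noteq> 0 \<and> mm n W (mm n (pw n A m) (\<Sum>k\<le>N'. sc (d k) (pw n A k))) = 0"
proof (induction N arbitrary: c W)
  case 0
  then have "c 0 \<noteq> 0" by auto
  moreover have "mm n W (mm n (pw n A 0) (\<Sum>k\<le>0. sc (c k) (pw n A k))) = 0"
    using 0 by (simp only: pw.simps mm_idm_l sp_sum sp_sc sp_pw)
  ultimately show ?case by blast
next
  case (Suc N)
  show ?case
  proof (cases "c 0 = 0")
    case False
    have "mm n W (mm n (pw n A 0) (\<Sum>k\<le>Suc N. sc (c k) (pw n A k))) = 0"
      using Suc.prems(2) by (simp only: pw.simps mm_idm_l sp_sum sp_sc sp_pw)
    then show ?thesis using False by blast
  next
    case True
    have eq: "(\<Sum>k\<le>Suc N. sc (c k) (pw n A k)) = mm n A (\<Sum>k\<le>N. sc (c (Suc k)) (pw n A k))"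
      using shift_sum[where N="Suc N" and c=c and n=n and A=A] True by (simp add: lessThan_Suc_atMost)
    have nz: "\<exists>k\<le>N. c (Suc k) \<noteq> 0"
      using Suc.prems(1) True by (metis Suc_le_mono not0_implies_Suc)
    have "mm n (mm n W A) (\<Sum>k\<le>N. sc (c (Suc k)) (pw n A k)) = 0"
      using Suc.prems(2) unfolding eq mm_assoc .
    from Suc.IH[OF nz this] obtain m d N' where
      "d 0 \<noteq> 0" "mm n (mm n W A) (mm n (pw n A m) (\<Sum>k\<le>N'. sc (d k) (pw n A k))) = 0" by blast
    then have "mm n W (mm n (pw n A (Suc m)) (\<Sum>k\<le>N'. sc (d k) (pw n A k))) = 0"
      by (simp only: pw.simps mm_assoc)
    then show ?thesis using \<open>d 0 \<noteq> 0\<close> by blast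
  qed
qed

interpretation VS: vector_space sc
  by unfold_locales (auto simp: sc_def fun_eq_iff algebra_simps)

definition Em :: "nat \<times> nat \<Rightarrow> nat \<Rightarrow> nat \<Rightarrow> real" where
  "Em p = (\<lambda>i j. if i = fst p \<and> j = snd p then 1 else 0)"

lemma sp_span:
  assumes "sp n M"
  shows "M \<in> VS.span (Em ` ({..<n}\<times>{..<n}))"
proof -
  have "M = (\<Sum>p\<in>{..<n}\<times>{..<n}. sc (M (fst p) (snd p)) (Em p))"
  proof (intro ext)
    fix i j
    have "(\<Sum>p\<in>{..<n}\<times>{..<n}. sc (M (fst p) (snd p)) (Em p)) i j
        = (\<Sum>p\<in>{..<n}\<times>{..<n}. if p = (i,j) then M i j else 0)"
      unfolding sum_fun2 by (intro sum.cong) (auto simp: sc_def Em_def)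
    also have "\<dots> = M i j" using assms by (auto simp: sp_def)
    finally show "M i j = (\<Sum>p\<in>{..<n}\<times>{..<n}. sc (M (fst p) (snd p)) (Em p)) i j" by simp
  qed
  also have "\<dots> \<in> VS.span (Em ` ({..<n}\<times>{..<n}))"
    by (intro VS.span_sum VS.span_scale VS.span_base) auto
  finally show ?thesis .
qed

lemma annih:
  assumes "sp n A"
  shows "\<exists>N c. (\<exists>k\<le>N. c k \<noteq> 0) \<and> (\<Sum>k\<le>N. sc (c k) (pw n A k)) = 0"
proof (cases "inj_on (pw n A) {..n*n}")
  case True
  let ?B = "Em ` ({..<n}\<times>{..<n})"
  let ?F = "pw n A ` {..n*n}"
  have dep: "VS.dependent ?F"
  proof (rule ccontr)
    assume ind: "\<not> VS.dependent ?F"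
    have "?F \<subseteq> VS.span ?B" using sp_span by auto
    from VS.independent_span_bound[OF _ ind this] have "card ?F \<le> card ?B" by auto
    also have "\<dots> \<le> card ({..<n}\<times>{..<n})" by (rule card_image_le) auto
    also have "\<dots> = n*n" by simp
    finally show False using card_image[OF True] by simp
  qed
  then obtain t u where t: "finite t" "t \<subseteq> ?F" "(\<Sum>v\<in>t. sc (u v) v) = 0" "\<exists>v\<in>t. u v \<noteq> 0"
    unfolding VS.dependent_explicit by blast
  define c where "c k = (if pw n A k \<in> t then u (pw n A k) else 0)" for k
  let ?K = "{k\<in>{..n*n}. pw n A k \<in> t}"
  have "(\<Sum>k\<le>n*n. sc (c k) (pw n A k)) = (\<Sum>k\<in>?K. sc (c k) (pw n A k))"
    by (rule sum.mono_neutral_right) (auto simp: c_def)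
  also have "\<dots> = (\<Sum>k\<in>?K. sc (u (pw n A k)) (pw n A k))"
    by (auto simp: c_def)
  also have "\<dots> = (\<Sum>v\<in>pw n A ` ?K. sc (u v) v)"
    by (rule sum.reindex[symmetric, unfolded comp_def]) (rule inj_on_subset[OF True], auto)
  also have "pw n A ` ?K = t" using t(2) by auto
  finally have "(\<Sum>k\<le>n*n. sc (c k) (pw n A k)) = 0" using t(3) by (simp only:)
  moreover obtain v where "v \<in> t" "u v \<noteq> 0" using t(4) by blast
  then obtain k where "k \<le> n*n" "v = pw n A k" "c k \<noteq> 0" using t(2) by (auto simp: c_def)
  ultimately show ?thesis by blast
next
  case False
  then obtain a b where ab: "a \<le> n*n" "b \<le> n*n" "a \<noteq> b" "pw n A a = pw n A b"
    unfolding inj_on_def by auto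
  define c where "c k = (if k = a then 1 else if k = b then -1 else (0::real))" for k
  have "(\<Sum>k\<le>n*n. sc (c k) (pw n A k)) = 0"
  proof (intro ext)
    fix i j
    have "(\<Sum>k\<le>n*n. sc (c k) (pw n A k)) i j
       = (\<Sum>k\<le>n*n. (if k = a then pw n A k i j else 0) + (if k = b then - pw n A k i j else 0))"
      unfolding sum_fun2 by (intro sum.cong) (auto simp: c_def sc_def ab(3))
    also have "\<dots> = pw n A a i j - pw n A b i j"
      using ab by (simp add: sum.distrib)
    also have "\<dots> = 0" using ab by simp
    finally show "(\<Sum>k\<le>n*n. sc (c k) (pw n A k)) i j = 0 i j" by simp
  qed
  moreover have "c a \<noteq> 0" by (simp add: c_def)
  ultimately show ?thesis using ab by blast
qed

lemma poly_props:
  fixes N :: nat and d :: "nat \<Rightarrow> real"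
  assumes "sp n A" "tr A = A"
  defines "T \<equiv> (\<Sum>k<N. sc (d k) (pw n A k))"
  shows "sp n T" "tr T = T" "mm n A T = mm n T A"
proof -
  show "sp n T" unfolding T_def by (intro sp_sum) simp
  show "tr T = T" unfolding T_def tr_sum by (simp add: tr_sc tr_pw assms)
  show "mm n A T = mm n T A" unfolding T_def mm_sum_r mm_sum_l
    by (simp add: mm_sc_r mm_sc_l pw_comm assms)
qed

lemma gen_inv:
  assumes A: "sp n A" "tr A = A"
  shows "\<exists>Y. sp n Y \<and> tr Y = Y \<and> mm n A Y = mm n Y A \<and> mm n A (mm n A Y) = A"
proof -
  obtain N c where "\<exists>k\<le>N. c k \<noteq> 0" "(\<Sum>k\<le>N. sc (c k) (pw n A k)) = 0"
    using annih[OF A(1)] by blast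
  then have "mm n (idm n) (\<Sum>k\<le>N. sc (c k) (pw n A k)) = 0" by simp
  from red[OF A(1) \<open>\<exists>k\<le>N. c k \<noteq> 0\<close> this] obtain m d N' where
    d0: "d 0 \<noteq> 0" and rel: "mm n (idm n) (mm n (pw n A m) (\<Sum>k\<le>N'. sc (d k) (pw n A k))) = 0"
    by blast
  define S where "S = (\<Sum>k\<le>N'. sc (d k) (pw n A k))"
  have spS: "sp n S" unfolding S_def by (intro sp_sum) simp
  have rel2: "mm n (pw n A m) S = 0" using rel unfolding S_def by (simp only: mm_idm_l sp_mm)
  have AS: "mm n A S = 0"
  proof (cases m)
    case 0
    then have "S = 0" using rel2 spS by (simp only: pw.simps mm_idm_l)
    then show ?thesis by simp
  next
    case (Suc m')
    then show ?thesis using ker[OF A] rel2 by blast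
  qed
  define T where "T = (\<Sum>k<N'. sc (d (Suc k)) (pw n A k))"
  have ST: "S = sc (d 0) (idm n) + mm n A T" unfolding S_def T_def by (rule shift_sum)
  note TP = poly_props[OF A, where N=N' and d="\<lambda>k. d (Suc k)", folded T_def]
  have "mm n A S = sc (d 0) A + mm n A (mm n A T)"
    unfolding ST mm_add_r mm_sc_r using A(1) by (simp only: mm_idm_r)
  then have eq0: "sc (d 0) A + mm n A (mm n A T) = 0" using AS by simp
  define Y where "Y = sc (- 1 / d 0) T"
  have "mm n A (mm n A Y) = A"
  proof (intro ext)
    fix i j
    have "d 0 * A i j + mm n A (mm n A T) i j = 0" using fun_cong[OF fun_cong[OF eq0, of i], of j]
      by (simp add: sc_def)
    then show "mm n A (mm n A Y) i j = A i j"
      unfolding Y_def mm_sc_r using d0 by (simp add: sc_def field_simps)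
  qed
  moreover have "sp n Y" "tr Y = Y" "mm n A Y = mm n Y A"
    using TP unfolding Y_def by (simp_all only: sp_sc tr_sc mm_sc_r mm_sc_l)
  ultimately show ?thesis by blast
qed

definition trunc :: "nat \<Rightarrow> (nat\<Rightarrow>nat\<Rightarrow>real) \<Rightarrow> nat\<Rightarrow>nat\<Rightarrow>real" where
  "trunc n A = (\<lambda>i j. if i<n \<and> j<n then A i j else 0)"

lemma sp_trunc[simp]: "sp n (trunc n A)" by (simp add: sp_def trunc_def)
lemma tr_trunc_sym: "(\<And>i j. A i j = A j i) \<Longrightarrow> tr (trunc n A) = trunc n A"
  by (auto simp: tr_def trunc_def fun_eq_iff)
lemma mm_trunc_l[simp]: "mm n (trunc n P) Q = mm n P Q"
  by (auto simp: mm_def trunc_def fun_eq_iff)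
lemma mm_trunc_r[simp]: "mm n P (trunc n Q) = mm n P Q"
  by (auto simp: mm_def trunc_def fun_eq_iff)

lemma trunc_apply[simp]: "i<n \<Longrightarrow> j<n \<Longrightarrow> trunc n A i j = A i j" by (simp add: trunc_def)

lemma sp_eq: "sp n F \<Longrightarrow> sp n G \<Longrightarrow> F = G \<longleftrightarrow> (\<forall>i<n. \<forall>j<n. F i j = G i j)"
  by (auto simp: sp_def fun_eq_iff) (metis)

lemma mat_mult_mm: "i<n \<Longrightarrow> j<n \<Longrightarrow> mat_mult n P Q i j = mm n P Q i j"
  by (simp add: mat_mult_def mm_def)
lemma mat_mult_mm2: "i<n \<Longrightarrow> j<n \<Longrightarrow> mat_mult n (mat_mult n P Q) R i j = mm n (mm n P Q) R i j"
  by (auto simp: mat_mult_def mm_def intro!: sum.cong)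

definition MPm :: "nat \<Rightarrow> (nat\<Rightarrow>nat\<Rightarrow>real) \<Rightarrow> (nat\<Rightarrow>nat\<Rightarrow>real) \<Rightarrow> bool" where
  "MPm n A X \<longleftrightarrow> sp n X \<and> mm n (mm n A X) A = A \<and> mm n (mm n X A) X = X \<and>
     tr (mm n A X) = mm n A X \<and> tr (mm n X A) = mm n X A"

lemma MP_iff: "is_MP_inverse n A0 X \<longleftrightarrow> MPm n (trunc n A0) X"
proof -
  let ?A = "trunc n A0"
  have e1: "mm n (mm n ?A X) ?A = ?A \<longleftrightarrow> (\<forall>i<n. \<forall>j<n. mat_mult n (mat_mult n A0 X) A0 i j = A0 i j)"
    by (simp only: sp_eq[of n, OF sp_mm sp_trunc] mm_trunc_l mm_trunc_r) (simp add: mat_mult_mm2)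
  have e2: "sp n X \<Longrightarrow> mm n (mm n X ?A) X = X \<longleftrightarrow> (\<forall>i<n. \<forall>j<n. mat_mult n (mat_mult n X A0) X i j = X i j)"
    by (simp only: sp_eq[of n, OF sp_mm] mm_trunc_l mm_trunc_r) (simp add: mat_mult_mm2)
  have e3: "tr (mm n ?A X) = mm n ?A X \<longleftrightarrow> (\<forall>i<n. \<forall>j<n. mat_mult n A0 X i j = mat_mult n A0 X j i)"
    by (simp only: sp_eq[of n, OF sp_tr[OF sp_mm] sp_mm] mm_trunc_l mm_trunc_r) (auto simp add: mat_mult_mm tr_def)
  have e4: "tr (mm n X ?A) = mm n X ?A \<longleftrightarrow> (\<forall>i<n. \<forall>j<n. mat_mult n X A0 i j = mat_mult n X A0 j i)"
    by (simp only: sp_eq[of n, OF sp_tr[OF sp_mm] sp_mm] mm_trunc_l mm_trunc_r) (auto simp add: mat_mult_mm tr_def)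
  have e5: "sp n X \<longleftrightarrow> (\<forall>i j. \<not> (i < n \<and> j < n) \<longrightarrow> X i j = 0)" by (simp add: sp_def)
  show ?thesis
  proof (cases "sp n X")
    case True
    show ?thesis
      apply (simp only: is_MP_inverse_def MPm_def e1 e2[OF True] e3 e4 e5[symmetric] True simp_thms)
      apply blast
      done
  next
    case False
    show ?thesis by (simp only: is_MP_inverse_def MPm_def e5[symmetric] False simp_thms)
  qed
qed

lemma MP_unique:
  assumes X: "MPm n A X" and Z: "MPm n A Z"
  shows "X = Z"
proof -
  have X1: "mm n (mm n A X) A = A" "mm n (mm n X A) X = X" "tr (mm n A X) = mm n A X" "tr (mm n X A) = mm n X A"
    using X by (auto simp: MPm_def)
  have Z1: "mm n (mm n A Z) A = A" "mm n (mm n Z A) Z = Z" "tr (mm n A Z) = mm n A Z" "tr (mm n Z A) = mm n Z A"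
    using Z by (auto simp: MPm_def)
  have trA1: "tr A = mm n (tr A) (mm n A Z)"
  proof -
    have "tr A = tr (mm n (mm n A Z) A)" using Z1(1) by simp
    also have "\<dots> = mm n (tr A) (tr (mm n A Z))" by (simp only: tr_mm)
    finally show ?thesis using Z1(3) by simp
  qed
  have "X = mm n X (tr (mm n A X))" using X1(2,3) by (simp add: mm_assoc)
  also have "\<dots> = mm n X (mm n (tr X) (tr A))" by (simp only: tr_mm)
  also have "\<dots> = mm n X (mm n (mm n (tr X) (tr A)) (mm n A Z))"
    by (subst trA1) (simp only: mm_assoc)
  also have "\<dots> = mm n X (mm n (mm n A X) (mm n A Z))"
    by (simp only: tr_mm[symmetric] X1(3))
  also have "\<dots> = mm n (mm n (mm n X A) X) (mm n A Z)" by (simp only: mm_assoc)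
  also have "\<dots> = mm n X (mm n A Z)" using X1(2) by simp
  finally have EX: "X = mm n X (mm n A Z)" .
  have trA2: "tr A = mm n (mm n X A) (tr A)"
  proof -
    have "tr A = tr (mm n A (mm n X A))" using X1(1) by (simp add: mm_assoc)
    also have "\<dots> = mm n (tr (mm n X A)) (tr A)" by (simp only: tr_mm)
    finally show ?thesis using X1(4) by simp
  qed
  have "Z = mm n (tr (mm n Z A)) Z" using Z1(2,4) by simp
  also have "\<dots> = mm n (mm n (tr A) (tr Z)) Z" by (simp only: tr_mm)
  also have "\<dots> = mm n (mm n (mm n X A) (mm n (tr A) (tr Z))) Z"
    by (subst trA2) (simp only: mm_assoc)
  also have "\<dots> = mm n (mm n (mm n X A) (mm n Z A)) Z"
    by (simp only: tr_mm[symmetric] Z1(4))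
  also have "\<dots> = mm n (mm n X A) (mm n (mm n Z A) Z)" by (simp only: mm_assoc)
  also have "\<dots> = mm n X (mm n A Z)" using Z1(2) by (simp add: mm_assoc)
  finally show ?thesis using EX by simp
qed

lemma MP_exists:
  assumes A: "sp n A" "tr A = A"
  shows "\<exists>X. MPm n A X \<and> tr X = X"
proof -
  obtain Y where Y: "sp n Y" "tr Y = Y" and c1: "mm n A Y = mm n Y A" and c2: "mm n A (mm n A Y) = A"
    using gen_inv[OF A] by blast
  have R1: "mm n A (mm n Y Z) = mm n Y (mm n A Z)" for Z
  proof -
    have "mm n A (mm n Y Z) = mm n (mm n A Y) Z" by (simp only: mm_assoc)
    also have "\<dots> = mm n (mm n Y A) Z" by (simp only: c1)
    finally show ?thesis by (simp only: mm_assoc)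
  qed
  have R2': "mm n Y (mm n A A) = A"
  proof -
    have "mm n Y (mm n A A) = mm n (mm n Y A) A" by (simp only: mm_assoc)
    also have "\<dots> = mm n (mm n A Y) A" by (simp only: c1)
    also have "\<dots> = mm n A (mm n A Y)" by (simp only: mm_assoc c1[symmetric])
    finally show ?thesis using c2 by simp
  qed
  have R2: "mm n Y (mm n A (mm n A Z)) = mm n A Z" for Z
  proof -
    have "mm n Y (mm n A (mm n A Z)) = mm n (mm n Y (mm n A A)) Z" by (simp only: mm_assoc)
    then show ?thesis by (simp only: R2')
  qed
  define X where "X = mm n Y (mm n A Y)"
  have AX: "mm n A X = mm n Y A" unfolding X_def by (simp only: mm_assoc R1 R2 R2' c1)
  have XA: "mm n X A = mm n Y A" unfolding X_def by (simp only: mm_assoc R1 R2 R2' c1)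
  have XAX: "mm n (mm n X A) X = X" unfolding X_def by (simp only: mm_assoc R1 R2 R2' c1)
  have AXA: "mm n (mm n A X) A = A" unfolding AX by (simp only: mm_assoc R1 R2 R2' c1)
  have trYA: "tr (mm n Y A) = mm n Y A" by (simp only: tr_mm A(2) Y(2) c1)
  have trX: "tr X = X" unfolding X_def by (simp only: tr_mm A(2) Y(2) c1 mm_assoc)
  have "MPm n A X" unfolding MPm_def using AX XA XAX AXA trYA by (simp add: X_def)
  then show ?thesis using trX by blast
qed

lemma MP_props:
  fixes n :: nat
  assumes sym: "\<And>i j. A0 i j = A0 j i"
  defines "X \<equiv> MP_pinv n A0"
  shows "sp n X" "tr X = X" "mm n X (mm n (trunc n A0) X) = X"
proof -
  have A: "sp n (trunc n A0)" "tr (trunc n A0) = trunc n A0" using sym by (auto intro: tr_trunc_sym)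
  obtain X0 where X0: "MPm n (trunc n A0) X0" "tr X0 = X0" using MP_exists[OF A] by blast
  have "X = X0" unfolding X_def MP_pinv_def
  proof (rule the_equality)
    show "is_MP_inverse n A0 X0" using X0 MP_iff by blast
    show "\<And>Z. is_MP_inverse n A0 Z \<Longrightarrow> Z = X0" using X0 MP_iff MP_unique by blast
  qed
  then show "sp n X" "tr X = X" "mm n X (mm n (trunc n A0) X) = X"
    using X0 by (auto simp: MPm_def mm_assoc)
qed

lemma quad:
  fixes n :: nat and A0 :: "nat\<Rightarrow>nat\<Rightarrow>real" and v :: "nat \<Rightarrow> real"
  assumes sym: "\<And>i j. A0 i j = A0 j i"
  defines "b \<equiv> \<lambda>i. \<Sum>j<n. MP_pinv n A0 i j * v j"
  shows "(\<Sum>i<n. \<Sum>j<n. b i * b j * A0 i j) = (\<Sum>i<n. b i * v i)"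
proof -
  define X where "X = MP_pinv n A0"
  have P: "sp n X" "tr X = X" "mm n X (mm n (trunc n A0) X) = X"
    using MP_props[OF sym] unfolding X_def by auto
  have Xs: "X i j = X j i" for i j using P(2) by (rule tr_sym)
  define Wc where "Wc i c = (\<Sum>j<n. A0 i j * X j c)" for i c
  have W: "(\<Sum>i<n. X a i * Wc i c) = X a c" if "a<n" "c<n" for a c
  proof -
    have "X a c = mm n X (mm n (trunc n A0) X) a c" using P(3) by simp
    also have "\<dots> = (\<Sum>i<n. X a i * Wc i c)"
      using that by (auto simp: mm_def Wc_def intro!: sum.cong)
    finally show ?thesis by simp
  qed
  have b: "b i = (\<Sum>a<n. v a * X a i)" for i unfolding b_def X_def[symmetric]
    by (simp add: Xs mult.commute)
  have s1: "(\<Sum>j<n. b j * A0 i j) = (\<Sum>c<n. v c * Wc i c)" for i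
  proof -
    have "(\<Sum>j<n. b j * A0 i j) = (\<Sum>j<n. \<Sum>c<n. v c * (A0 i j * X j c))"
      unfolding b_def X_def[symmetric] sum_distrib_right by (intro sum.cong refl) (simp add: ac_simps)
    also have "\<dots> = (\<Sum>c<n. \<Sum>j<n. v c * (A0 i j * X j c))" by (rule sum.swap)
    also have "\<dots> = (\<Sum>c<n. v c * Wc i c)" by (simp add: Wc_def sum_distrib_left)
    finally show ?thesis .
  qed
  have "(\<Sum>i<n. \<Sum>j<n. b i * b j * A0 i j) = (\<Sum>i<n. b i * (\<Sum>c<n. v c * Wc i c))"
    by (simp add: s1[symmetric] sum_distrib_left mult.assoc)
  also have "\<dots> = (\<Sum>i<n. \<Sum>a<n. v a * (\<Sum>c<n. v c * (X a i * Wc i c)))"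
    unfolding b sum_product unfolding sum_distrib_left by (intro sum.cong refl) (simp add: ac_simps)
  also have "\<dots> = (\<Sum>a<n. \<Sum>i<n. v a * (\<Sum>c<n. v c * (X a i * Wc i c)))" by (rule sum.swap)
  also have "\<dots> = (\<Sum>a<n. v a * (\<Sum>c<n. v c * (\<Sum>i<n. X a i * Wc i c)))"
  proof (intro sum.cong refl)
    fix a
    have "(\<Sum>i<n. v a * (\<Sum>c<n. v c * (X a i * Wc i c))) = v a * (\<Sum>i<n. \<Sum>c<n. v c * (X a i * Wc i c))"
      by (simp add: sum_distrib_left)
    also have "(\<Sum>i<n. \<Sum>c<n. v c * (X a i * Wc i c)) = (\<Sum>c<n. \<Sum>i<n. v c * (X a i * Wc i c))"
      by (rule sum.swap)
    also have "\<dots> = (\<Sum>c<n. v c * (\<Sum>i<n. X a i * Wc i c))" by (simp add: sum_distrib_left)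
    finally show "(\<Sum>i<n. v a * (\<Sum>c<n. v c * (X a i * Wc i c))) = v a * (\<Sum>c<n. v c * (\<Sum>i<n. X a i * Wc i c))" .
  qed
  also have "\<dots> = (\<Sum>a<n. v a * (\<Sum>c<n. v c * X a c))"
    by (intro sum.cong refl) (simp add: W)
  also have "\<dots> = (\<Sum>i<n. b i * v i)"
    unfolding b_def X_def[symmetric] sum_distrib_right sum_distrib_left by (intro sum.cong refl) (simp add: ac_simps)
  finally show ?thesis .
qed

lemma absprod_le: "\<bar>(a::real) * b\<bar> \<le> a^2 + b^2"
proof -
  have "0 \<le> (\<bar>a\<bar> - \<bar>b\<bar>)^2" by simp
  then have "2 * (\<bar>a\<bar> * \<bar>b\<bar>) \<le> a^2 + b^2" by (simp add: power2_eq_square algebra_simps)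
  moreover have "0 \<le> \<bar>a\<bar> * \<bar>b\<bar>" by simp
  ultimately have "\<bar>a\<bar> * \<bar>b\<bar> \<le> a^2 + b^2" by linarith
  then show ?thesis by (simp add: abs_mult)
qed

lemma L2_meas: "L2_on D u \<Longrightarrow> u \<in> borel_measurable (lebesgue_on D)"
  by (simp add: L2_on_def)
lemma L2_int: "L2_on D u \<Longrightarrow> integrable (lebesgue_on D) (\<lambda>x. (u x)^2)"
  by (simp add: L2_on_def)

lemma L2_mult_int:
  assumes "L2_on D u" "L2_on D v"
  shows "integrable (lebesgue_on D) (\<lambda>x. u x * v x)"
proof (rule Bochner_Integration.integrable_bound[of _ "\<lambda>x. (u x)^2 + (v x)^2"])
  show "integrable (lebesgue_on D) (\<lambda>x. (u x)^2 + (v x)^2)"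
    using assms by (intro Bochner_Integration.integrable_add L2_int)
  show "(\<lambda>x. u x * v x) \<in> borel_measurable (lebesgue_on D)"
    using assms by (intro borel_measurable_times L2_meas)
  show "AE x in lebesgue_on D. norm (u x * v x) \<le> norm ((u x)^2 + (v x)^2)"
  proof (intro AE_I2)
    fix x
    have "\<bar>u x * v x\<bar> \<le> \<bar>(u x)^2 + (v x)^2\<bar>"
      using absprod_le[of "u x" "v x"] by simp
    then show "norm (u x * v x) \<le> norm ((u x)^2 + (v x)^2)" by (simp only: real_norm_def)
  qed
qed

lemma L2_add:
  assumes "L2_on D u" "L2_on D v"
  shows "L2_on D (\<lambda>x. u x + v x)"
proof -
  have "integrable (lebesgue_on D) (\<lambda>x. (u x)^2 + 2 * (u x * v x) + (v x)^2)"
    using assms L2_mult_int[OF assms]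
    by (intro Bochner_Integration.integrable_add integrable_mult_right L2_int)
  then have "integrable (lebesgue_on D) (\<lambda>x. (u x + v x)^2)"
    by (simp add: power2_sum algebra_simps)
  then show ?thesis using assms unfolding L2_on_def by (auto intro: borel_measurable_add)
qed

lemma L2_scale:
  assumes "L2_on D u"
  shows "L2_on D (\<lambda>x. a * u x)"
proof -
  have "integrable (lebesgue_on D) (\<lambda>x. a^2 * (u x)^2)"
    using assms by (intro integrable_mult_right L2_int)
  then have "integrable (lebesgue_on D) (\<lambda>x. (a * u x)^2)"
    by (simp add: power_mult_distrib)
  then show ?thesis using assms unfolding L2_on_def by (auto intro: borel_measurable_times)
qed

lemma L2_diff:
  assumes "L2_on D u" "L2_on D v"
  shows "L2_on D (\<lambda>x. u x - v x)"
  using L2_add[OF assms(1) L2_scale[OF assms(2), of "-1"]] by simp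

lemma L2_zero: "L2_on D (\<lambda>x. 0)"
  by (simp add: L2_on_def)

lemma L2_sum:
  "(\<And>k. k \<in> K \<Longrightarrow> L2_on D (F k)) \<Longrightarrow> L2_on D (\<lambda>x. \<Sum>k\<in>K. F k x)"
proof (induction K rule: infinite_finite_induct)
  case (infinite K) then show ?case by (simp add: L2_zero)
next
  case empty then show ?case by (simp add: L2_zero)
next
  case (insert k K)
  then show ?case by (simp add: L2_add)
qed

lemma L2_bounded:
  assumes "compact D" "h \<in> borel_measurable lebesgue" "bounded (range h)"
  shows "L2_on D h"
proof -
  interpret finite_measure "lebesgue_on D"
    using assms(1) by (intro finite_measure_lebesgue_on lmeasurable_compact)
  obtain B where B: "\<And>x. \<bar>h x\<bar> \<le> B" using assms(3) unfolding bounded_iff by auto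
  have hm: "h \<in> borel_measurable (lebesgue_on D)"
    using assms(2) by (rule measurable_restrict_space1)
  have "integrable (lebesgue_on D) (\<lambda>x. (h x)^2)"
  proof (rule integrable_const_bound[where B="B^2"])
    show "AE x in lebesgue_on D. norm ((h x)^2) \<le> B^2"
      using B by (intro AE_I2) (simp, metis abs_ge_zero power2_abs power_mono)
    show "(\<lambda>x. (h x)^2) \<in> borel_measurable (lebesgue_on D)" using hm by measurable
  qed
  then show ?thesis using hm by (simp add: L2_on_def)
qed

lemma inner_add_left:
  assumes "L2_on D u" "L2_on D v" "L2_on D w"
  shows "l2_inner D (\<lambda>x. u x + v x) w = l2_inner D u w + l2_inner D v w"
  unfolding l2_inner_def using L2_mult_int[OF assms(1,3)] L2_mult_int[OF assms(2,3)]
  by (simp add: distrib_right)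

lemma inner_diff_left:
  assumes "L2_on D u" "L2_on D v" "L2_on D w"
  shows "l2_inner D (\<lambda>x. u x - v x) w = l2_inner D u w - l2_inner D v w"
  unfolding l2_inner_def using L2_mult_int[OF assms(1,3)] L2_mult_int[OF assms(2,3)]
  by (simp add: left_diff_distrib)

lemma inner_scale_left: "l2_inner D (\<lambda>x. a * u x) w = a * l2_inner D u w"
  unfolding l2_inner_def by (simp add: mult.assoc)

lemma inner_sym: "l2_inner D u w = l2_inner D w u"
  unfolding l2_inner_def by (simp add: mult.commute)

lemma inner_sum_left:
  assumes "\<And>k. k \<in> K \<Longrightarrow> L2_on D (F k)" "L2_on D w"
  shows "l2_inner D (\<lambda>x. \<Sum>k\<in>K. F k x) w = (\<Sum>k\<in>K. l2_inner D (F k) w)"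
  unfolding l2_inner_def sum_distrib_right
  by (rule Bochner_Integration.integral_sum[where f="\<lambda>k x. F k x * w x"]) (use assms L2_mult_int in blast)

lemma inner_self_nonneg: "0 \<le> l2_inner D u u"
  unfolding l2_inner_def by simp

lemma l2_norm_sq: "(l2_norm D u)^2 = l2_inner D u u"
  unfolding l2_norm_def using inner_self_nonneg by simp

lemma gram_sym: "batch_gram D g l L i j = batch_gram D g l L j i"
  unfolding batch_gram_def by (rule inner_sym)

lemma proj_step:
  assumes e: "L2_on D e" and G: "\<And>i. i < l \<Longrightarrow> L2_on D (g (L - l + 1 + i))"
  shows "l2_inner D (\<lambda>x. e x - batch_out D g l L e x) (\<lambda>x. e x - batch_out D g l L e x)
         = l2_inner D e e - l2_inner D e (batch_out D g l L e)"
proof -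
  define G where "G i = g (L - l + 1 + i)" for i
  define v where "v j = l2_inner D (G j) e" for j
  define b where "b i = batch_beta D g l L e i" for i
  define h where "h = batch_out D g l L e"
  have hdef: "h = (\<lambda>x. \<Sum>i<l. b i * G i x)" by (simp add: h_def batch_out_def b_def G_def fun_eq_iff)
  have bdef: "b i = (\<Sum>j<l. MP_pinv l (batch_gram D g l L) i j * v j)" for i
    by (simp add: b_def batch_beta_def v_def G_def)
  have GL: "L2_on D (G i)" if "i<l" for i using G that by (simp add: G_def)
  have hL: "L2_on D h" unfolding hdef by (intro L2_sum L2_scale GL) simp
  have hw: "l2_inner D h w = (\<Sum>i<l. b i * l2_inner D (G i) w)" if "L2_on D w" for w
    unfolding hdef using that
    by (subst inner_sum_left) (auto intro!: L2_scale GL simp: inner_scale_left)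
  have hh: "l2_inner D h h = (\<Sum>i<l. \<Sum>j<l. b i * b j * batch_gram D g l L i j)"
  proof -
    have "l2_inner D h h = (\<Sum>i<l. b i * l2_inner D (G i) h)" by (rule hw[OF hL])
    also have "\<dots> = (\<Sum>i<l. b i * (\<Sum>j<l. b j * batch_gram D g l L i j))"
    proof (intro sum.cong refl)
      fix i assume i: "i \<in> {..<l}"
      have "l2_inner D (G i) h = l2_inner D h (G i)" by (rule inner_sym)
      also have "\<dots> = (\<Sum>j<l. b j * l2_inner D (G j) (G i))" using GL i by (intro hw) auto
      also have "\<dots> = (\<Sum>j<l. b j * batch_gram D g l L i j)"
        by (intro sum.cong refl) (metis inner_sym batch_gram_def G_def)
      finally show "b i * l2_inner D (G i) h = b i * (\<Sum>j<l. b j * batch_gram D g l L i j)" by simp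
    qed
    also have "\<dots> = (\<Sum>i<l. \<Sum>j<l. b i * b j * batch_gram D g l L i j)"
      by (simp add: sum_distrib_left mult.assoc)
    finally show ?thesis .
  qed
  have he: "l2_inner D h e = (\<Sum>i<l. b i * v i)" using hw[OF e] by (simp add: v_def)
  have q: "(\<Sum>i<l. \<Sum>j<l. b i * b j * batch_gram D g l L i j) = (\<Sum>i<l. b i * v i)"
    unfolding bdef by (rule quad) (rule gram_sym)
  have ehL: "L2_on D (\<lambda>x. e x - h x)" using e hL by (rule L2_diff)
  have s1: "l2_inner D (\<lambda>x. e x - h x) (\<lambda>x. e x - h x)
      = l2_inner D e (\<lambda>x. e x - h x) - l2_inner D h (\<lambda>x. e x - h x)"
    using e hL ehL by (rule inner_diff_left)
  have s2: "l2_inner D e (\<lambda>x. e x - h x) = l2_inner D e e - l2_inner D h e"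
    using inner_diff_left[OF e hL e] inner_sym[of D e "\<lambda>x. e x - h x"] by simp
  have s3: "l2_inner D h (\<lambda>x. e x - h x) = l2_inner D e h - l2_inner D h h"
    using inner_diff_left[OF e hL hL] inner_sym[of D h "\<lambda>x. e x - h x"] by simp
  have s4: "l2_inner D e h = l2_inner D h e" by (rule inner_sym)
  have "l2_inner D (\<lambda>x. e x - h x) (\<lambda>x. e x - h x) = l2_inner D e e - l2_inner D e h"
    using s1 s2 s3 s4 hh he q by linarith
  then show ?thesis unfolding h_def .
qed

lemma net_comp: "net_out g \<beta> L x $ c = (\<Sum>j\<in>{1..L}. \<beta> j $ c * g j x)"
  by (simp add: net_out_def mult.commute)

lemma vl2_sq: "(vl2_norm D F)^2 = (\<Sum>c\<in>UNIV. l2_inner D (\<lambda>x. F x $ c) (\<lambda>x. F x $ c))"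
proof -
  have "0 \<le> (\<Sum>c\<in>UNIV. (l2_norm D (\<lambda>x. F x $ c))^2)" by (intro sum_nonneg) simp
  then show ?thesis unfolding vl2_norm_def by (simp add: l2_norm_sq)
qed

lemma split_sum:
  fixes L L0 l :: nat and F :: "nat \<Rightarrow> 'a::comm_monoid_add"
  assumes "L = L0 + l"
  shows "(\<Sum>j\<in>{1..L}. F j) = (\<Sum>j\<in>{1..L0}. F j) + (\<Sum>i<l. F (L0 + 1 + i))"
proof -
  have se: "{1..L} = {1..L0} \<union> {Suc L0..<l + Suc L0}" using assms by auto
  have "(\<Sum>j\<in>{1..L}. F j) = (\<Sum>j\<in>{1..L0} \<union> {Suc L0..<l + Suc L0}. F j)" by (simp only: se)
  also have "\<dots> = (\<Sum>j\<in>{1..L0}. F j) + (\<Sum>j\<in>{Suc L0..<l + Suc L0}. F j)"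
    by (rule sum.union_disjoint) auto
  also have "(\<Sum>j\<in>{Suc L0..<l + Suc L0}. F j) = (\<Sum>i<l. F (L0 + 1 + i))"
    using sum.shift_bounds_nat_ivl[of F 0 "Suc L0" l] by (simp add: atLeast0LessThan ac_simps)
  finally show ?thesis .
qed

lemma geo_conv:
  fixes E :: "nat \<Rightarrow> real" and a :: "nat \<Rightarrow> real"
  assumes nonneg: "\<And>k. 0 \<le> E k"
    and step: "\<And>k. k \<ge> 1 \<Longrightarrow> E k \<le> a k * E (k - 1)"
    and ev: "eventually (\<lambda>k. a k \<le> q) sequentially" and q: "0 \<le> q" "q < 1"
  shows "E \<longlonglongrightarrow> 0"
proof -
  obtain K where K: "\<And>k. k \<ge> K \<Longrightarrow> a k \<le> q" using ev unfolding eventually_sequentially by blast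
  have b: "E (t + (K+1)) \<le> q^(t+1) * E K" for t
  proof (induction t)
    case 0
    have "E (K+1) \<le> a (K+1) * E K" using step[of "K+1"] by simp
    also have "\<dots> \<le> q * E K" using K[of "K+1"] nonneg[of K] by (intro mult_right_mono) auto
    finally show ?case by simp
  next
    case (Suc t)
    have "E (Suc t + (K+1)) \<le> a (Suc t + (K+1)) * E (t + (K+1))" using step[of "Suc t + (K+1)"] by simp
    also have "\<dots> \<le> q * E (t + (K+1))" using K[of "Suc t + (K+1)"] nonneg by (intro mult_right_mono) auto
    also have "\<dots> \<le> q * (q^(t+1) * E K)" using Suc q by (intro mult_left_mono) auto
    finally show ?case by (simp add: ac_simps)
  qed
  have "(\<lambda>t. q^t) \<longlonglongrightarrow> 0" using q by (intro LIMSEQ_power_zero) simp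
  then have "(\<lambda>t. q^(t+1)) \<longlonglongrightarrow> 0" by (rule LIMSEQ_ignore_initial_segment)
  then have lim: "(\<lambda>t. q^(t+1) * E K) \<longlonglongrightarrow> 0" by (rule tendsto_mult_left_zero)
  have "(\<lambda>t. E (t + (K+1))) \<longlonglongrightarrow> 0"
    by (rule tendsto_sandwich[OF _ _ tendsto_const lim]) (use nonneg b in auto)
  then show ?thesis by (rule LIMSEQ_offset)
qed

theorem theorem2:
  fixes D :: "(real^'m) set"
    and f :: "real^'m \<Rightarrow> real^'c"
    and \<Gamma> :: "(real^'m \<Rightarrow> real) set"
    and r :: real and \<mu> :: "nat \<Rightarrow> real" and l :: nat
    and g :: "nat \<Rightarrow> real^'m \<Rightarrow> real"
    and \<beta>s :: "nat \<Rightarrow> nat \<Rightarrow> real^'c"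
  assumes D_compact: "compact D"
    and f_L2: "\<forall>c. L2_on D (\<lambda>x. f x $ c)"
    and Gamma_nodes: "\<forall>h\<in>\<Gamma>. admissible_node h"
    and dense: "span_dense_L2 D \<Gamma>"
    and r: "0 < r" "r < 1"
    and mu_nonneg: "\<forall>L\<ge>1. 0 \<le> \<mu> L"
    and mu_lim: "\<mu> \<longlonglongrightarrow> 0"
    and mu_le: "\<forall>L\<ge>1. \<mu> L \<le> 1 - r"
    and l_pos: "l \<ge> 1"
    and g_in: "\<forall>j\<ge>1. g j \<in> \<Gamma>"
    and LS: "\<forall>k. is_LS_weights D f g (k * l) (\<beta>s (k * l))"
    and ineq: "\<forall>k\<ge>1. \<forall>c.
        let L = k * l;
            e = (\<lambda>x. (f x - net_out g (\<beta>s (L - l)) (L - l) x) $ c)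
        in l2_inner D e (batch_out D g l L e) \<ge> (1 - r - \<mu> L) * (l2_norm D e)^2"
  shows "(\<lambda>k. vl2_norm D (\<lambda>x. f x - net_out g (\<beta>s (k * l)) (k * l) x)) \<longlonglongrightarrow> 0"
proof -
  have gL: "L2_on D (g j)" if "j \<ge> 1" for j
  proof -
    have "admissible_node (g j)" using g_in Gamma_nodes that by blast
    then show ?thesis using D_compact unfolding admissible_node_def by (intro L2_bounded) auto
  qed
  have resL: "L2_on D (\<lambda>x. (f x - net_out g \<beta> L x) $ c)" for \<beta> L c
  proof -
    have "L2_on D (\<lambda>x. f x $ c - (\<Sum>j\<in>{1..L}. \<beta> j $ c * g j x))"
      using f_L2 gL by (intro L2_diff L2_sum L2_scale) auto
    then show ?thesis by (simp add: net_comp)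
  qed
  define E where "E k = (vl2_norm D (\<lambda>x. f x - net_out g (\<beta>s (k * l)) (k * l) x))^2" for k
  have Enn: "0 \<le> E k" for k by (simp add: E_def)
  have step: "E k \<le> (r + \<mu> (k * l)) * E (k - 1)" if k: "k \<ge> 1" for k
  proof -
    define L where "L = k * l"
    define L0 where "L0 = L - l"
    have "1 * l \<le> k * l" using k by (rule mult_le_mono1)
    then have LL0: "L = L0 + l" unfolding L0_def L_def by simp  
    have L0k: "(k - 1) * l = L0" unfolding L0_def L_def by (simp add: diff_mult_distrib)
    define e where "e c = (\<lambda>x. (f x - net_out g (\<beta>s L0) L0 x) $ c)" for c
    have eL: "L2_on D (e c)" for c unfolding e_def by (rule resL)
    define \<beta>2 where "\<beta>2 j = (if j \<le> L0 then \<beta>s L0 j else (\<chi> c. batch_beta D g l L (e c) (j - L0 - 1)))" for j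
    have res2: "(f x - net_out g \<beta>2 L x) $ c = e c x - batch_out D g l L (e c) x" for x c
    proof -
      have "net_out g \<beta>2 L x $ c = (\<Sum>j\<in>{1..L0}. \<beta>2 j $ c * g j x) + (\<Sum>i<l. \<beta>2 (L0 + 1 + i) $ c * g (L0 + 1 + i) x)"
        unfolding net_comp by (rule split_sum[OF LL0])
      also have "(\<Sum>j\<in>{1..L0}. \<beta>2 j $ c * g j x) = net_out g (\<beta>s L0) L0 x $ c"
        unfolding net_comp by (intro sum.cong refl) (simp add: \<beta>2_def)
      also have "(\<Sum>i<l. \<beta>2 (L0 + 1 + i) $ c * g (L0 + 1 + i) x) = batch_out D g l L (e c) x"
        unfolding batch_out_def \<beta>2_def using LL0 by (intro sum.cong refl) simp
      finally show ?thesis by (simp add: e_def)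
    qed
    have "vl2_norm D (\<lambda>x. f x - net_out g (\<beta>s L) L x) \<le> vl2_norm D (\<lambda>x. f x - net_out g \<beta>2 L x)"
      using LS unfolding is_LS_weights_def L_def by blast
    then have E_as: "E k \<le> (vl2_norm D (\<lambda>x. f x - net_out g \<beta>2 L x))^2"
      unfolding E_def L_def[symmetric] by (rule power_mono) (simp add: vl2_norm_def sum_nonneg)
    also have "\<dots> = (\<Sum>c\<in>UNIV. l2_inner D (\<lambda>x. e c x - batch_out D g l L (e c) x) (\<lambda>x. e c x - batch_out D g l L (e c) x))"
      unfolding vl2_sq res2 ..
    also have "\<dots> = (\<Sum>c\<in>UNIV. l2_inner D (e c) (e c) - l2_inner D (e c) (batch_out D g l L (e c)))"
    proof (intro sum.cong refl proj_step eL)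
      fix c i assume "i < l"
      then show "L2_on D (g (L - l + 1 + i))" by (intro gL) simp
    qed
    also have "\<dots> \<le> (\<Sum>c\<in>UNIV. (r + \<mu> L) * l2_inner D (e c) (e c))"
    proof (intro sum_mono)
      fix c
      have "l2_inner D (e c) (batch_out D g l L (e c)) \<ge> (1 - r - \<mu> L) * (l2_norm D (e c))^2"
        using ineq[rule_format, OF k, of c] unfolding Let_def e_def L0_def L_def .
      then show "l2_inner D (e c) (e c) - l2_inner D (e c) (batch_out D g l L (e c)) \<le> (r + \<mu> L) * l2_inner D (e c) (e c)"
        unfolding l2_norm_sq by (simp add: algebra_simps)
    qed
    also have "\<dots> = (r + \<mu> L) * E (k - 1)"
      unfolding E_def vl2_sq L0k e_def by (simp add: sum_distrib_left)
    finally show ?thesis unfolding L_def .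
  qed
  have mul: "(\<lambda>k. \<mu> (k * l)) \<longlonglongrightarrow> 0"
  proof -
    have "filterlim (\<lambda>k. k * l) sequentially sequentially"
      using l_pos by (intro filterlim_subseq strict_monoI) auto
    then show ?thesis using mu_lim by (rule filterlim_compose[rotated])
  qed
  have ev: "eventually (\<lambda>k. r + \<mu> (k * l) \<le> (1 + r) / 2) sequentially"
  proof -
    have "eventually (\<lambda>k. dist (\<mu> (k * l)) 0 < (1 - r) / 2) sequentially"
      using mul r by (intro tendstoD) auto
    then show ?thesis by eventually_elim (auto simp: dist_real_def)
  qed
  have "E \<longlonglongrightarrow> 0"
    by (rule geo_conv[OF Enn step ev]) (use r in auto)
  then have "(\<lambda>k. sqrt (E k)) \<longlonglongrightarrow> sqrt 0" by (rule tendsto_real_sqrt)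
  moreover have "sqrt (E k) = vl2_norm D (\<lambda>x. f x - net_out g (\<beta>s (k * l)) (k * l) x)" for k
    unfolding E_def by (simp add: vl2_norm_def sum_nonneg)
  ultimately show ?thesis by simp
qed

end
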